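(* Let $E,F$ be normed spaces over $\mathbb K$, $F$ spherically complete, and $f\colon E\to F$ a linear isometry. Let $S$ be the set of linear subspaces $M\subseteq F$ with $\operatorname{Im}(f)\subseteq M$ such that the inclusion $\operatorname{Im}(f)\hookrightarrow M$ is immediate. Then (1) $S$ has a maximal element with respect to inclusion; (2) for any maximal element $\breve E$ of $S$, the space $\breve E$ together with the linear isometry $E\to\breve E$, $x\mapsto f(x)$, is a spherical completion of $E$.
   Context: $\mathbb K$: nontrivially normed field with ultrametric absolute value; normed space over $\mathbb K$: normed vector space with $\|x+y\|\le\max(\|x\|,\|y\|)$. $x\perp_m V$ means $\|x\|=\inf_{v\in V}\|x-v\|$. A linear isometry $f\colon E\to F$ is immediate if the only $v\in F$ with $v\perp_m\operatorname{Im}(f)$ is $0$. Spherically complete: every decreasing sequence of closed balls (radii $\ge0$) has nonempty intersection. A spherical completion of $E$ is a spherically complete normed space $\breve E$ over $\mathbb K$ with a linear isometry $i\colon E\to\breve E$ such that no proper spherically complete linear subspace of $\breve E$ contains $i(E)$. *)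

theory Defs
  imports Complex_Main
begin

definition ultra_valued_field :: "('k::field \<Rightarrow> real) \<Rightarrow> bool" where
  "ultra_valued_field absK \<longleftrightarrow>
     absK 0 = 0 \<and> (\<forall>a. a \<noteq> 0 \<longrightarrow> absK a > 0) \<and>
     (\<forall>a b. absK (a * b) = absK a * absK b) \<and>
     (\<forall>a b. absK (a + b) \<le> max (absK a) (absK b)) \<and>
     (\<exists>a. absK a \<noteq> 0 \<and> absK a \<noteq> 1)"

definition ultra_normed_space ::
  "('k::field \<Rightarrow> real) \<Rightarrow> ('k \<Rightarrow> 'v::ab_group_add \<Rightarrow> 'v) \<Rightarrow> ('v \<Rightarrow> real) \<Rightarrow> bool" where
  "ultra_normed_space absK sc nrm \<longleftrightarrow>
     vector_space sc \<and>
     (\<forall>x. nrm x \<ge> 0) \<and> (\<forall>x. nrm x = 0 \<longleftrightarrow> x = 0) \<and>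
     (\<forall>a x. nrm (sc a x) = absK a * nrm x) \<and>
     (\<forall>x y. nrm (x + y) \<le> max (nrm x) (nrm y))"

definition orth_m :: "('v::ab_group_add \<Rightarrow> real) \<Rightarrow> 'v \<Rightarrow> 'v set \<Rightarrow> bool" where
  "orth_m nrm x V \<longleftrightarrow> nrm x = (INF v\<in>V. nrm (x - v))"

definition immediate :: "('w::ab_group_add \<Rightarrow> real) \<Rightarrow> ('v \<Rightarrow> 'w) \<Rightarrow> 'v set \<Rightarrow> 'w set \<Rightarrow> bool" where
  "immediate nrm g A M \<longleftrightarrow> (\<forall>v\<in>M. orth_m nrm v (g ` A) \<longrightarrow> v = 0)"

definition cball_in :: "('v::ab_group_add \<Rightarrow> real) \<Rightarrow> 'v set \<Rightarrow> 'v \<Rightarrow> real \<Rightarrow> 'v set" where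
  "cball_in nrm M c r = {y \<in> M. nrm (y - c) \<le> r}"

definition spherically_complete :: "('v::ab_group_add \<Rightarrow> real) \<Rightarrow> 'v set \<Rightarrow> bool" where
  "spherically_complete nrm M \<longleftrightarrow>
     (\<forall>(c::nat \<Rightarrow> 'v) (r::nat \<Rightarrow> real).
        (\<forall>n. c n \<in> M \<and> r n \<ge> 0) \<and>
        (\<forall>n. cball_in nrm M (c (Suc n)) (r (Suc n)) \<subseteq> cball_in nrm M (c n) (r n)) \<longrightarrow>
        (\<Inter>n. cball_in nrm M (c n) (r n)) \<noteq> {})"

definition spherical_completion ::
  "('k::field \<Rightarrow> 'e::ab_group_add \<Rightarrow> 'e) \<Rightarrow> ('e \<Rightarrow> real) \<Rightarrow>
   ('k \<Rightarrow> 'f::ab_group_add \<Rightarrow> 'f) \<Rightarrow> ('f \<Rightarrow> real) \<Rightarrow> 'f set \<Rightarrow> ('e \<Rightarrow> 'f) \<Rightarrow> bool" where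
  "spherical_completion sE nE sF nF M i \<longleftrightarrow>
     module.subspace sF M \<and> spherically_complete nF M \<and>
     Vector_Spaces.linear sE sF i \<and> range i \<subseteq> M \<and> (\<forall>x. nF (i x) = nE x) \<and>
     (\<forall>N. module.subspace sF N \<and> N \<subseteq> M \<and> range i \<subseteq> N \<and> spherically_complete nF N
          \<longrightarrow> N = M)"

end

theory Submission
  imports Defs
begin

locale UN =
  fixes absK :: "'k::field \<Rightarrow> real" and sF :: "'k \<Rightarrow> 'f::ab_group_add \<Rightarrow> 'f" and nF :: "'f \<Rightarrow> real"
  assumes VF: "ultra_valued_field absK" and NS: "ultra_normed_space absK sF nF"
begin

sublocale vector_space sF using NS by (simp add: ultra_normed_space_def)

lemma nonneg: "nF x \<ge> 0" using NS by (simp add: ultra_normed_space_def)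
lemma zero_iff: "nF x = 0 \<longleftrightarrow> x = 0" using NS by (simp add: ultra_normed_space_def)
lemma nF0[simp]: "nF 0 = 0" using zero_iff by simp
lemma nscale: "nF (sF a x) = absK a * nF x" using NS by (simp add: ultra_normed_space_def)
lemma ultra: "nF (x + y) \<le> max (nF x) (nF y)" using NS by (simp add: ultra_normed_space_def)
lemma absK_pos: "a \<noteq> 0 \<Longrightarrow> absK a > 0" using VF by (simp add: ultra_valued_field_def)
lemma absK_minus1: "absK (-1) = 1"
proof -
  have m: "\<And>a b. absK (a*b) = absK a * absK b" using VF by (simp add: ultra_valued_field_def)
  have p1: "absK 1 > 0" "absK (-1) > 0" by (auto intro!: absK_pos)
  have "absK 1 = absK 1 * absK 1" using m[of 1 1] by simp
  hence a1: "absK 1 = 1" using p1 by simp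
  have "absK 1 = absK (-1) * absK (-1)" using m[of "-1" "-1"] by simp
  hence "absK (-1) * absK (-1) = 1 * 1" using a1 by simp
  thus ?thesis using p1 by (smt (verit) mult_less_cancel_right2 mult_strict_mono)
qed
lemma nminus: "nF (- x) = nF x"
  using nscale[of "-1" x] absK_minus1 by simp
lemma nsym: "nF (x - y) = nF (y - x)"
  using nminus[of "x - y"] by simp
lemma tri: "nF (x - z) \<le> max (nF (x - y)) (nF (y - z))"
  using ultra[of "x - y" "y - z"] by simp

lemma orth_iff: assumes "0 \<in> V" shows "orth_m nF x V \<longleftrightarrow> \<not> (\<exists>v\<in>V. nF (x - v) < nF x)"
proof -
  have bdd: "bdd_below ((\<lambda>v. nF (x - v)) ` V)" by (rule bdd_belowI[of _ 0]) (auto simp: nonneg)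
  have le: "(INF v\<in>V. nF (x - v)) \<le> nF x" using cINF_lower[OF bdd assms] by simp
  show ?thesis
  proof
    assume o: "orth_m nF x V"
    show "\<not> (\<exists>v\<in>V. nF (x - v) < nF x)"
    proof
      assume "\<exists>v\<in>V. nF (x - v) < nF x"
      then obtain v where "v \<in> V" "nF (x - v) < nF x" by auto
      hence "(INF v\<in>V. nF (x - v)) < nF x" using cINF_lower[OF bdd] by (meson le_less_trans)
      thus False using o by (simp add: orth_m_def)
    qed
  next
    assume "\<not> (\<exists>v\<in>V. nF (x - v) < nF x)"
    hence "nF x \<le> (INF v\<in>V. nF (x - v))" using assms by (intro cINF_greatest) (auto simp: not_less)
    thus "orth_m nF x V" using le by (simp add: orth_m_def)
  qed
qed

lemma immediate_iff: assumes "0 \<in> A"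
  shows "immediate nF id A M \<longleftrightarrow> (\<forall>v\<in>M. v \<noteq> 0 \<longrightarrow> (\<exists>w\<in>A. nF (v - w) < nF v))"
  using orth_iff[OF assms] by (auto simp: immediate_def)

lemma best_approx:
  assumes N: "subspace N" and sc: "spherically_complete nF N"
  shows "\<exists>y\<in>N. \<forall>n\<in>N. nF (x - y) \<le> nF (x - n)"
proof -
  define d where "d = (INF n\<in>N. nF (x - n))"
  have N0: "0 \<in> N" using N subspace_0 by blast
  have bdd: "bdd_below ((\<lambda>v. nF (x - v)) ` N)" by (rule bdd_belowI[of _ 0]) (auto simp: nonneg)
  have dle: "\<And>n. n \<in> N \<Longrightarrow> d \<le> nF (x - n)" unfolding d_def using cINF_lower[OF bdd] by simp
  have "\<forall>k. \<exists>n\<in>N. nF (x - n) < d + 1 / real (Suc k)"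
  proof
    fix k
    have "d < d + 1 / real (Suc k)" by simp
    thus "\<exists>n\<in>N. nF (x - n) < d + 1 / real (Suc k)"
      unfolding d_def using N0 cINF_less_iff[OF _ bdd] by blast
  qed
  then obtain g where g: "\<And>k. g k \<in> N" "\<And>k. nF (x - g k) < d + 1 / real (Suc k)" by metis
  define c where "c = rec_nat (g 0) (\<lambda>k ck. if nF (x - g (Suc k)) < nF (x - ck) then g (Suc k) else ck)"
  have c0: "c 0 = g 0" and cS: "\<And>k. c (Suc k) = (if nF (x - g (Suc k)) < nF (x - c k) then g (Suc k) else c k)"
    by (simp_all add: c_def)
  have cN: "\<And>k. c k \<in> N" by (induct_tac k) (auto simp: c0 cS g)
  have cg: "\<And>k. nF (x - c k) \<le> nF (x - g k)" 
    by (induct_tac k) (auto simp: c0 cS)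
  have cmono: "\<And>k. nF (x - c (Suc k)) \<le> nF (x - c k)" by (auto simp: cS)
  define r where "r k = nF (x - c k)" for k
  have dec: "cball_in nF N (c (Suc k)) (r (Suc k)) \<subseteq> cball_in nF N (c k) (r k)" for k
  proof
    fix y assume "y \<in> cball_in nF N (c (Suc k)) (r (Suc k))"
    hence y: "y \<in> N" "nF (y - c (Suc k)) \<le> r (Suc k)" by (auto simp: cball_in_def)
    have "nF (c (Suc k) - c k) \<le> max (nF (c (Suc k) - x)) (nF (x - c k))" by (rule tri)
    also have "\<dots> \<le> r k" using cmono[of k] by (simp add: r_def nsym[of "c (Suc k)" x])
    finally have "nF (c (Suc k) - c k) \<le> r k" .
    moreover have "nF (y - c k) \<le> max (nF (y - c (Suc k))) (nF (c (Suc k) - c k))" by (rule tri)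
    ultimately have "nF (y - c k) \<le> r k" using y cmono[of k] r_def by auto
    thus "y \<in> cball_in nF N (c k) (r k)" using y by (simp add: cball_in_def)
  qed
  have "(\<Inter>n. cball_in nF N (c n) (r n)) \<noteq> {}"
    using sc dec cN unfolding spherically_complete_def r_def by (auto simp: nonneg)
  then obtain y where y: "\<And>k. y \<in> cball_in nF N (c k) (r k)" by blast
  hence yN: "y \<in> N" by (auto simp: cball_in_def)
  have yk: "nF (x - y) < d + 1 / real (Suc k)" for k
  proof -
    have "nF (x - y) \<le> max (nF (x - c k)) (nF (c k - y))" by (rule tri)
    also have "\<dots> \<le> r k" using y[of k] by (auto simp: cball_in_def r_def nsym[of y])
    also have "\<dots> < d + 1 / real (Suc k)" using cg[of k] g(2)[of k] r_def by simp
    finally show ?thesis .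
  qed
  have "nF (x - y) \<le> d"
  proof (rule ccontr)
    assume "\<not> nF (x - y) \<le> d"
    then obtain k where "inverse (real (Suc k)) < nF (x - y) - d" using reals_Archimedean[of "nF (x - y) - d"] by auto
    thus False using yk[of k] by (simp add: field_simps)
  qed
  thus ?thesis using yN dle by force
qed


lemma extension:
  assumes M: "subspace M" and A0: "0 \<in> A" and imm: "immediate nF id A M"
    and x: "\<forall>p\<in>M. \<exists>c\<in>M. nF (x - c) < nF (x - p)"
  shows "subspace (span (insert x M)) \<and> M \<subseteq> span (insert x M) \<and> immediate nF id A (span (insert x M))"
proof -
  have spM: "span M = M" using M by simp
  have immM: "\<forall>v\<in>M. v \<noteq> 0 \<longrightarrow> (\<exists>w\<in>A. nF (v - w) < nF v)" using imm immediate_iff[OF A0] by blast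
  have "\<forall>v\<in>span (insert x M). v \<noteq> 0 \<longrightarrow> (\<exists>w\<in>A. nF (v - w) < nF v)"
  proof (intro ballI impI)
    fix v assume v: "v \<in> span (insert x M)" "v \<noteq> 0"
    then obtain k where k: "v - sF k x \<in> M" using span_insert spM by auto
    define m0 where "m0 = v - sF k x"
    have vm0: "v = m0 + sF k x" by (simp add: m0_def)
    have "\<exists>m\<in>M. nF (v - m) < nF v"
    proof (cases "k = 0")
      case True
      hence "v \<in> M" using k by simp
      thus ?thesis using v(2) zero_iff nonneg by (intro bexI[of _ v]) (auto simp: less_le)
    next
      case False
      define p where "p = sF (- inverse k) m0"
      have pM: "p \<in> M" using k M by (simp add: p_def m0_def subspace_scale subspace_neg)
      obtain c where c: "c \<in> M" "nF (x - c) < nF (x - p)" using x pM by blast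
      have kp: "sF k p = - m0" using False by (simp add: p_def)
      have v1: "v = sF k (x - p)" using kp vm0 by (simp add: scale_right_diff_distrib)
      have v2: "v - (m0 + sF k c) = sF k (x - c)" using vm0 by (simp add: scale_right_diff_distrib)
      have mM: "m0 + sF k c \<in> M" using k c M by (simp add: m0_def subspace_add subspace_scale)
      have "nF (v - (m0 + sF k c)) < nF v"
        unfolding v2 using v1 nscale c(2) absK_pos[OF False] by simp
      thus ?thesis using mM by blast
    qed
    then obtain m where m: "m \<in> M" "nF (v - m) < nF v" by blast
    have "m \<noteq> 0" using m by auto
    then obtain w where w: "w \<in> A" "nF (m - w) < nF m" using immM m by blast
    have "nF m \<le> max (nF (m - v)) (nF (v - 0))" using tri[of m 0 v] by simp
    hence "nF m \<le> nF v" using m(2) nsym[of m v] by auto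
    moreover have "nF (v - w) \<le> max (nF (v - m)) (nF (m - w))" by (rule tri)
    ultimately have "nF (v - w) < nF v" using m w by auto
    thus "\<exists>w\<in>A. nF (v - w) < nF v" using w by blast
  qed
  moreover have "M \<subseteq> span (insert x M)" by (meson span_superset subset_insertI subset_trans)
  ultimately show ?thesis using immediate_iff[OF A0] by blast
qed

end

theorem proposition6p3:
  fixes absK :: "'k::field \<Rightarrow> real"
    and sE :: "'k \<Rightarrow> 'e::ab_group_add \<Rightarrow> 'e" and nE :: "'e \<Rightarrow> real"
    and sF :: "'k \<Rightarrow> 'f::ab_group_add \<Rightarrow> 'f" and nF :: "'f \<Rightarrow> real"
    and f :: "'e \<Rightarrow> 'f"
    and S :: "'f set set"
  assumes "ultra_valued_field absK"
    and "ultra_normed_space absK sE nE"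
    and "ultra_normed_space absK sF nF"
    and "spherically_complete nF UNIV"
    and "Vector_Spaces.linear sE sF f"
    and "\<forall>x. nF (f x) = nE x"
    and "S = {M. module.subspace sF M \<and> range f \<subseteq> M \<and> immediate nF id (range f) M}"
  shows "(\<exists>M\<in>S. \<forall>N\<in>S. M \<subseteq> N \<longrightarrow> N = M)
     \<and> (\<forall>M\<in>S. (\<forall>N\<in>S. M \<subseteq> N \<longrightarrow> N = M) \<longrightarrow> spherical_completion sE nE sF nF M f)"
proof -
  interpret U: UN absK sF nF using assms(1,3) by unfold_locales
  interpret Lf: Vector_Spaces.linear sE sF f by (rule assms(5))
  have Rsub: "U.subspace (range f)" using Lf.subspace_image[of UNIV] by simp
  have R0: "0 \<in> range f" using Rsub U.subspace_0 by blast
  have immI: "\<And>M. immediate nF id (range f) M \<longleftrightarrow> (\<forall>v\<in>M. v \<noteq> 0 \<longrightarrow> (\<exists>w\<in>range f. nF (v - w) < nF v))"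
    using U.immediate_iff[OF R0] by blast
  have RS: "range f \<in> S"
  proof -
    have "\<forall>v\<in>range f. v \<noteq> 0 \<longrightarrow> (\<exists>w\<in>range f. nF (v - w) < nF v)"
      using U.zero_iff U.nonneg by (metis diff_self less_eq_real_def)
    thus ?thesis using assms(7) Rsub immI by auto
  qed
  have part1: "\<exists>M\<in>S. \<forall>N\<in>S. M \<subseteq> N \<longrightarrow> N = M"
  proof (rule subset_Zorn_nonempty)
    show "S \<noteq> {}" using RS by blast
  next
    fix C assume C: "C \<noteq> {}" "subset.chain S C"
    hence CS: "C \<subseteq> S" and ch: "\<And>X Y. X \<in> C \<Longrightarrow> Y \<in> C \<Longrightarrow> X \<subseteq> Y \<or> Y \<subseteq> X"
      by (auto simp: subset_chain_def)
    have sub: "\<And>X. X \<in> C \<Longrightarrow> U.subspace X" using CS assms(7) by auto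
    have "U.subspace (\<Union>C)"
    proof (rule U.subspaceI)
      show "0 \<in> \<Union>C" using C(1) sub U.subspace_0 by blast
    next
      fix x y assume "x \<in> \<Union>C" "y \<in> \<Union>C"
      then obtain X Y where XY: "X \<in> C" "Y \<in> C" "x \<in> X" "y \<in> Y" by blast
      show "x + y \<in> \<Union>C"
      proof (cases "X \<subseteq> Y")
        case True thus ?thesis using XY sub[of Y] U.subspace_add by blast
      next
        case False hence "Y \<subseteq> X" using ch XY by blast
        thus ?thesis using XY sub[of X] U.subspace_add by blast
      qed
    next
      fix c x assume "x \<in> \<Union>C"
      thus "sF c x \<in> \<Union>C" using sub U.subspace_scale by blast
    qed
    moreover have "range f \<subseteq> \<Union>C" using C(1) CS assms(7) by blast
    moreover have "immediate nF id (range f) (\<Union>C)"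
      using CS assms(7) immI by blast
    ultimately show "\<Union>C \<in> S" using assms(7) by blast
  qed
  have part2: "spherical_completion sE nE sF nF M f" if MS: "M \<in> S" and mx: "\<forall>N\<in>S. M \<subseteq> N \<longrightarrow> N = M" for M
  proof -
    have Msub: "U.subspace M" and RM: "range f \<subseteq> M" and Mimm: "immediate nF id (range f) M"
      using MS assms(7) by auto
    have noext: False if x: "\<forall>p\<in>M. \<exists>c\<in>M. nF (x - c) < nF (x - p)" for x
    proof -
      have e: "U.subspace (U.span (insert x M)) \<and> M \<subseteq> U.span (insert x M) \<and> immediate nF id (range f) (U.span (insert x M))"
        by (rule U.extension[OF Msub R0 Mimm x])
      hence "U.span (insert x M) \<in> S" using RM assms(7) by auto
      hence "U.span (insert x M) = M" using mx e by blast
      hence "x \<in> M" using U.span_superset by blast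
      then obtain c where "nF (x - c) < nF (x - x)" using x by blast
      thus False using U.nonneg[of "x - c"] by simp
    qed
    have sc: "spherically_complete nF M"
      unfolding spherically_complete_def
    proof (intro allI impI)
      fix c :: "nat \<Rightarrow> 'f" and r :: "nat \<Rightarrow> real"
      assume h: "(\<forall>n. c n \<in> M \<and> 0 \<le> r n) \<and> (\<forall>n. cball_in nF M (c (Suc n)) (r (Suc n)) \<subseteq> cball_in nF M (c n) (r n))"
      show "(\<Inter>n. cball_in nF M (c n) (r n)) \<noteq> {}"
      proof
        assume empty: "(\<Inter>n. cball_in nF M (c n) (r n)) = {}"
        define \<rho> where "\<rho> k = Min (r ` {..k})" for k
        have \<rho>le: "\<rho> k \<le> r k" for k by (simp add: \<rho>_def)
        have \<rho>in: "\<exists>j\<le>k. \<rho> k = r j" for k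
        proof -
          have "Min (r ` {..k}) \<in> r ` {..k}" by (rule Min_in) auto
          thus ?thesis unfolding \<rho>_def by (metis atMost_iff imageE)
        qed
        have \<rho>nn: "\<rho> k \<ge> 0" for k using \<rho>in[of k] h by auto
        have \<rho>mono: "\<rho> (Suc k) \<le> \<rho> k" for k
          unfolding \<rho>_def by (rule Min_antimono) auto
        have incl: "cball_in nF M (c l) (r l) \<subseteq> cball_in nF M (c j) (r j)" if "j \<le> l" for j l
          using lift_Suc_antimono_le[of "\<lambda>n. cball_in nF M (c n) (r n)"] h that by blast
        have self: "c l \<in> cball_in nF M (c l) (r l)" for l using h by (simp add: cball_in_def)
        have G: "nF (c l - c k) \<le> r j" if "j \<le> k" "k \<le> l" for j k l
        proof -
          have "nF (c l - c j) \<le> r j" using incl[of j l] self[of l] that by (auto simp: cball_in_def)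
          moreover have "nF (c k - c j) \<le> r j" using incl[of j k] self[of k] that by (auto simp: cball_in_def)
          moreover have "nF (c l - c k) \<le> max (nF (c l - c j)) (nF (c j - c k))" by (rule U.tri)
          ultimately show ?thesis using U.nsym[of "c j" "c k"] by auto
        qed
        have H: "nF (c l - c k) \<le> \<rho> k" if "k \<le> l" for k l
          using \<rho>in[of k] G that by auto
        have Fdec: "cball_in nF UNIV (c (Suc k)) (\<rho> (Suc k)) \<subseteq> cball_in nF UNIV (c k) (\<rho> k)" for k
        proof
          fix y assume "y \<in> cball_in nF UNIV (c (Suc k)) (\<rho> (Suc k))"
          hence y: "nF (y - c (Suc k)) \<le> \<rho> (Suc k)" by (simp add: cball_in_def)
          have "nF (y - c k) \<le> max (nF (y - c (Suc k))) (nF (c (Suc k) - c k))" by (rule U.tri)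
          thus "y \<in> cball_in nF UNIV (c k) (\<rho> k)" using y H[of k "Suc k"] \<rho>mono[of k]
            by (auto simp: cball_in_def)
        qed
        have "(\<Inter>n. cball_in nF UNIV (c n) (\<rho> n)) \<noteq> {}"
          using assms(4) Fdec \<rho>nn unfolding spherically_complete_def by blast
        then obtain x where x: "\<And>k. nF (x - c k) \<le> \<rho> k" by (auto simp: cball_in_def)
        have "\<forall>p\<in>M. \<exists>c'\<in>M. nF (x - c') < nF (x - p)"
        proof
          fix p assume pM: "p \<in> M"
          then obtain k where "p \<notin> cball_in nF M (c k) (r k)" using empty by blast
          hence pk: "nF (p - c k) > r k" using pM by (auto simp: cball_in_def)
          have "nF (p - c k) \<le> max (nF (p - x)) (nF (x - c k))" by (rule U.tri)
          hence "nF (x - p) > \<rho> k" using pk \<rho>le[of k] x[of k] U.nsym[of p x] by auto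
          thus "\<exists>c'\<in>M. nF (x - c') < nF (x - p)" using x[of k] h by (intro bexI[of _ "c k"]) auto
        qed
        thus False using noext by blast
      qed
    qed
    have minimal: "N = M" if N: "U.subspace N" "N \<subseteq> M" "range f \<subseteq> N" "spherically_complete nF N" for N
    proof
      show "M \<subseteq> N"
      proof
        fix x assume xM: "x \<in> M"
        obtain y where y: "y \<in> N" "\<And>n. n \<in> N \<Longrightarrow> nF (x - y) \<le> nF (x - n)"
          using U.best_approx[OF N(1) N(4)] by blast
        have "x - y = 0"
        proof (rule ccontr)
          assume nz: "x - y \<noteq> 0"
          have "x - y \<in> M" using xM y(1) N(2) Msub U.subspace_diff by blast
          then obtain w where w: "w \<in> range f" "nF (x - y - w) < nF (x - y)"
            using Mimm immI nz by blast
          have "y + w \<in> N" using y(1) w(1) N(1,3) U.subspace_add by blast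
          hence "nF (x - y) \<le> nF (x - (y + w))" using y(2) by blast
          thus False using w(2) by (simp add: diff_diff_eq)
        qed
        thus "x \<in> N" using y(1) by simp
      qed
    qed (rule N(2))
    show ?thesis unfolding spherical_completion_def
      using Msub sc assms(5,6) RM minimal by blast
  qed
  show ?thesis using part1 part2 by blast
qed

end
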